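(* Let $A,B,C$ be non-zero integers and let $(x_0,y_0,z_0)$ be a non-trivial integer solution of $Ax^2+By^2+Cz^2=0$ with $z_0\neq0$. Define $$P_x(m,n)=x_0Am^2+2y_0Bmn-x_0Bn^2,\quad P_y(m,n)=-y_0Am^2+2x_0Amn+y_0Bn^2,\quad P_z(m,n)=z_0Am^2+z_0Bn^2.$$ Then every integer solution $(x,y,z)$ of $Ax^2+By^2+Cz^2=0$ can be written as $$(x,y,z)=\frac{p}{q}\big(P_x(m,n),P_y(m,n),P_z(m,n)\big)$$ with integers $m,n$ coprime, integers $p,q$ coprime, and $q>0$; moreover, in any such representation of an integer triple $(x,y,z)$ (with $\gcd(m,n)=\gcd(p,q)=1$, $q>0$), $q$ divides $2\,\mathrm{lcm}(A,B)\,C\,z_0^2$. *)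

theory Defs
  imports Complex_Main
begin

definition Px :: "int \<Rightarrow> int \<Rightarrow> int \<Rightarrow> int \<Rightarrow> int \<Rightarrow> int \<Rightarrow> int \<Rightarrow> int" where
  "Px A B x0 y0 z0 m n = x0 * A * m^2 + 2 * y0 * B * m * n - x0 * B * n^2"

definition Py :: "int \<Rightarrow> int \<Rightarrow> int \<Rightarrow> int \<Rightarrow> int \<Rightarrow> int \<Rightarrow> int \<Rightarrow> int" where
  "Py A B x0 y0 z0 m n = - y0 * A * m^2 + 2 * x0 * A * m * n + y0 * B * n^2"

definition Pz :: "int \<Rightarrow> int \<Rightarrow> int \<Rightarrow> int \<Rightarrow> int \<Rightarrow> int \<Rightarrow> int \<Rightarrow> int" where
  "Pz A B x0 y0 z0 m n = z0 * A * m^2 + z0 * B * n^2"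

end

theory Submission imports Defs begin

lemma idm: assumes "A*x0^2+B*y0^2+C*z0^2 = 0"
  shows "2*A*C*z0^2*m^2 = -A*x0*Px A B x0 y0 z0 m n + B*y0*Py A B x0 y0 z0 m n + C*z0*Pz A B x0 y0 z0 m n"
  using assms unfolding Px_def Py_def Pz_def by algebra

lemma idn: assumes "A*x0^2+B*y0^2+C*z0^2 = 0"
  shows "2*B*C*z0^2*n^2 = A*x0*Px A B x0 y0 z0 m n - B*y0*Py A B x0 y0 z0 m n + C*z0*Pz A B x0 y0 z0 m n"
  using assms unfolding Px_def Py_def Pz_def by algebra

lemma param:
  fixes A B C x0 y0 z0 x y z :: int
  assumes "A*x0^2+B*y0^2+C*z0^2 = 0" "A*x^2+B*y^2+C*z^2 = 0"
  defines "l1 \<equiv> B*(y0*z - z0*y)" and "l2 \<equiv> A*(z0*x - x0*z)"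
  and "k \<equiv> -2*A*B*z0^2*(A*x0*x+B*y0*y+C*z0*z)"
  shows "z0 * Px A B x0 y0 z0 l1 l2 = z0 * (k*x)"
    "z0 * Py A B x0 y0 z0 l1 l2 = z0 * (k*y)"
    "z0 * Pz A B x0 y0 z0 l1 l2 = z0 * (k*z)"
  using assms(1,2) unfolding Px_def Py_def Pz_def l1_def l2_def k_def by algebra+

lemma degen:
  fixes A B C x0 y0 z0 :: int
  assumes "A*x0^2+B*y0^2+C*z0^2 = 0"
  shows "Px A B x0 y0 z0 x0 y0 = -C*z0^2*x0" "Py A B x0 y0 z0 x0 y0 = -C*z0^2*y0"
    "Pz A B x0 y0 z0 x0 y0 = -C*z0^2*z0"
  using assms unfolding Px_def Py_def Pz_def by algebra+

lemma homog:
  "Px A B x0 y0 z0 (g*m) (g*n) = g^2 * Px A B x0 y0 z0 m n"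
  "Py A B x0 y0 z0 (g*m) (g*n) = g^2 * Py A B x0 y0 z0 m n"
  "Pz A B x0 y0 z0 (g*m) (g*n) = g^2 * Pz A B x0 y0 z0 m n"
  unfolding Px_def Py_def Pz_def by algebra+

lemma zero:
  fixes A B C x0 y0 z0 m n :: int
  assumes "A \<noteq> 0" "B \<noteq> 0" "C \<noteq> 0" "z0 \<noteq> 0" "A*x0^2+B*y0^2+C*z0^2 = 0"
    "Px A B x0 y0 z0 m n = 0" "Py A B x0 y0 z0 m n = 0" "Pz A B x0 y0 z0 m n = 0"
  shows "m = 0 \<and> n = 0"
proof -
  have S: "A*m^2+B*n^2 = 0" using assms(4,8) unfolding Pz_def
    by (metis distrib_left mult.assoc mult_eq_0_iff)
  have e1: "B*n*(y0*m-x0*n) = 0" using S assms(6) unfolding Px_def by algebra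
  have e2: "A*m*(y0*m-x0*n) = 0" using S assms(7) unfolding Py_def by algebra
  show ?thesis
  proof (cases "y0*m-x0*n = 0")
    case False
    then show ?thesis using e1 e2 assms(1,2) by auto
  next
    case True
    have "m^2*(C*z0^2) = 0" using True S assms(5) by algebra
    then have "m = 0" using assms(3,4) by simp
    then show ?thesis using S assms(2) by simp
  qed
qed

lemma frac:
  fixes a b :: int assumes "b \<noteq> 0"
  shows "\<exists>p q. coprime p q \<and> q > 0 \<and> real_of_int a / real_of_int b = real_of_int p / real_of_int q"
proof -
  obtain p q where pq: "quotient_of (of_int a / of_int b :: rat) = (p, q)" by (cases "quotient_of (of_int a / of_int b :: rat)")
  have "coprime p q" using quotient_of_coprime[OF pq] .
  moreover have "q > 0" using quotient_of_denom_pos[OF pq] .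
  moreover have "(of_int a / of_int b :: rat) = of_int p / of_int q" using quotient_of_div[OF pq] .
  then have "real_of_rat (of_int a / of_int b) = real_of_rat (of_int p / of_int q)" by simp
  then have "real_of_int a / real_of_int b = real_of_int p / real_of_int q"
    by (simp add: of_rat_divide)
  ultimately show ?thesis by blast
qed

lemma reduce:
  fixes A B x0 y0 z0 x y z a b m0 n0 :: int
  assumes "b \<noteq> 0" "\<not> (m0 = 0 \<and> n0 = 0)"
    "b*x = a*Px A B x0 y0 z0 m0 n0" "b*y = a*Py A B x0 y0 z0 m0 n0" "b*z = a*Pz A B x0 y0 z0 m0 n0"
  shows "\<exists>m n p q :: int. coprime m n \<and> coprime p q \<and> q > 0 \<and>
               real_of_int x = real_of_int p / real_of_int q * real_of_int (Px A B x0 y0 z0 m n) \<and>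
               real_of_int y = real_of_int p / real_of_int q * real_of_int (Py A B x0 y0 z0 m n) \<and>
               real_of_int z = real_of_int p / real_of_int q * real_of_int (Pz A B x0 y0 z0 m n)"
proof -
  define g where "g = gcd m0 n0"
  have g0: "g \<noteq> 0" using assms(2) g_def by simp
  define m where "m = m0 div g"
  define n where "n = n0 div g"
  have cop: "coprime m n" unfolding m_def n_def g_def using assms(2) div_gcd_coprime by blast
  have mm: "m0 = g*m" unfolding m_def g_def by simp
  have nn: "n0 = g*n" unfolding n_def g_def by simp
  obtain p q where pq: "coprime p q" "q > 0" "real_of_int (a*g^2) / real_of_int b = real_of_int p / real_of_int q"
    using frac[OF assms(1)] by blast
  have key: "real_of_int x = real_of_int p / real_of_int q * real_of_int V"
    if "b*x = a*g^2*V" for x V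
  proof -
    have "real_of_int b * real_of_int x = real_of_int (a*g^2) * real_of_int V"
      using that by (metis of_int_mult mult.assoc)
    then have "real_of_int x = real_of_int (a*g^2) / real_of_int b * real_of_int V"
      using assms(1) by (simp add: field_simps)
    then show ?thesis by (simp only: pq(3))
  qed
  have "real_of_int x = real_of_int p / real_of_int q * real_of_int (Px A B x0 y0 z0 m n)"
    using assms(3) unfolding mm nn homog by (intro key) (simp add: mult.assoc)
  moreover have "real_of_int y = real_of_int p / real_of_int q * real_of_int (Py A B x0 y0 z0 m n)"
    using assms(4) unfolding mm nn homog by (intro key) (simp add: mult.assoc)
  moreover have "real_of_int z = real_of_int p / real_of_int q * real_of_int (Pz A B x0 y0 z0 m n)"
    using assms(5) unfolding mm nn homog by (intro key) (simp add: mult.assoc)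
  ultimately show ?thesis using cop pq(1,2) by blast
qed

lemma cop_dvd: fixes d c k l :: int assumes "d dvd c*k" "d dvd c*l" "coprime k l" shows "d dvd c"
proof -
  have "d dvd gcd (c*k) (c*l)" using assms by simp
  also have "gcd (c*k) (c*l) = normalize c" using assms(3) by (simp add: gcd_mult_left)
  finally show ?thesis by simp
qed

lemma int_eq_of_real:
  fixes x p q V :: int
  assumes "q > 0" "real_of_int x = real_of_int p / real_of_int q * real_of_int V"
  shows "q dvd p * V"
proof -
  have "real_of_int (q*x) = real_of_int (p*V)" using assms by (simp add: field_simps)
  then have "q*x = p*V" by (simp only: of_int_eq_iff)
  then show ?thesis by (metis dvd_triv_left)
qed

theorem theorem5:
  fixes A B C x0 y0 z0 :: int
  assumes "A \<noteq> 0" and "B \<noteq> 0" and "C \<noteq> 0"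
    and "A * x0^2 + B * y0^2 + C * z0^2 = 0"
    and "(x0, y0, z0) \<noteq> (0, 0, 0)"
    and "z0 \<noteq> 0"
  shows "(\<forall>x y z :: int. A * x^2 + B * y^2 + C * z^2 = 0 \<longrightarrow>
            (\<exists>m n p q :: int. coprime m n \<and> coprime p q \<and> q > 0 \<and>
               real_of_int x = real_of_int p / real_of_int q * real_of_int (Px A B x0 y0 z0 m n) \<and>
               real_of_int y = real_of_int p / real_of_int q * real_of_int (Py A B x0 y0 z0 m n) \<and>
               real_of_int z = real_of_int p / real_of_int q * real_of_int (Pz A B x0 y0 z0 m n)))
       \<and> (\<forall>x y z m n p q :: int. coprime m n \<and> coprime p q \<and> q > 0 \<and>
               real_of_int x = real_of_int p / real_of_int q * real_of_int (Px A B x0 y0 z0 m n) \<and>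
               real_of_int y = real_of_int p / real_of_int q * real_of_int (Py A B x0 y0 z0 m n) \<and>
               real_of_int z = real_of_int p / real_of_int q * real_of_int (Pz A B x0 y0 z0 m n)
            \<longrightarrow> q dvd 2 * lcm A B * C * z0^2)"
  proof (intro conjI allI impI)
  fix x y z :: int
  assume sol: "A * x^2 + B * y^2 + C * z^2 = 0"
  note E = assms(4)
  show "\<exists>m n p q :: int. coprime m n \<and> coprime p q \<and> q > 0 \<and>
               real_of_int x = real_of_int p / real_of_int q * real_of_int (Px A B x0 y0 z0 m n) \<and>
               real_of_int y = real_of_int p / real_of_int q * real_of_int (Py A B x0 y0 z0 m n) \<and>
               real_of_int z = real_of_int p / real_of_int q * real_of_int (Pz A B x0 y0 z0 m n)"
  proof (cases "x = 0 \<and> y = 0 \<and> z = 0")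
    case True
    show ?thesis
      by (rule exI[of _ 1], rule exI[of _ 0], rule exI[of _ 0], rule exI[of _ 1]) (simp add: True)
  next
    case nz: False
    show ?thesis
    proof (cases "z0*x - x0*z = 0 \<and> z0*y - y0*z = 0")
      case True
      have xy0: "\<not> (x0 = 0 \<and> y0 = 0)" using E assms(3,6) by auto
      have b: "-C*z0^3 \<noteq> 0" using assms(3,6) by simp
      show ?thesis
      proof (rule reduce[OF b xy0])
        show "- C * z0 ^ 3 * x = z * Px A B x0 y0 z0 x0 y0" unfolding degen[OF E]
        proof -
          have "z0*x = x0*z" using True by simp
          then have "(-C*z0^2)*(z0*x) = (-C*z0^2)*(x0*z)" by simp
          then show "- C * z0 ^ 3 * x = z * (-C*z0^2*x0)"
            by (simp add: power3_eq_cube power2_eq_square algebra_simps)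
        qed
        show "- C * z0 ^ 3 * y = z * Py A B x0 y0 z0 x0 y0" unfolding degen[OF E]
        proof -
          have "z0*y = y0*z" using True by simp
          then have "(-C*z0^2)*(z0*y) = (-C*z0^2)*(y0*z)" by simp
          then show "- C * z0 ^ 3 * y = z * (-C*z0^2*y0)"
            by (simp add: power3_eq_cube power2_eq_square algebra_simps)
        qed
        show "- C * z0 ^ 3 * z = z * Pz A B x0 y0 z0 x0 y0" unfolding degen[OF E]
          by (simp add: power3_eq_cube power2_eq_square algebra_simps)
      qed
    next
      case False
      define l1 where "l1 = B*(y0*z - z0*y)"
      define l2 where "l2 = A*(z0*x - x0*z)"
      define k where "k = -2*A*B*z0^2*(A*x0*x+B*y0*y+C*z0*z)"
      have l12: "\<not> (l1 = 0 \<and> l2 = 0)" using False assms(1,2) unfolding l1_def l2_def by auto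
      have "z0 * Px A B x0 y0 z0 l1 l2 = z0*(k*x)" 
        unfolding l1_def l2_def k_def by (rule param(1)[OF E sol])
      then have px: "Px A B x0 y0 z0 l1 l2 = k*x" by (simp only: mult_left_cancel[OF assms(6)])
      have "z0 * Py A B x0 y0 z0 l1 l2 = z0*(k*y)" 
        unfolding l1_def l2_def k_def by (rule param(2)[OF E sol])
      then have py: "Py A B x0 y0 z0 l1 l2 = k*y" by (simp only: mult_left_cancel[OF assms(6)])
      have "z0 * Pz A B x0 y0 z0 l1 l2 = z0*(k*z)" 
        unfolding l1_def l2_def k_def by (rule param(3)[OF E sol])
      then have pz: "Pz A B x0 y0 z0 l1 l2 = k*z" by (simp only: mult_left_cancel[OF assms(6)])
      have k0: "k \<noteq> 0"
      proof
        assume "k = 0"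
        then have "Px A B x0 y0 z0 l1 l2 = 0" "Py A B x0 y0 z0 l1 l2 = 0" "Pz A B x0 y0 z0 l1 l2 = 0"
          using px py pz by simp_all
        then have "l1 = 0 \<and> l2 = 0" by (rule zero[OF assms(1,2,3,6) E])
        then show False using l12 by simp
      qed
      show ?thesis
        by (rule reduce[OF k0 l12, where a=1]) (simp_all add: px py pz)
    qed
  qed
next
  fix x y z m n p q :: int
  assume h: "coprime m n \<and> coprime p q \<and> q > 0 \<and>
               real_of_int x = real_of_int p / real_of_int q * real_of_int (Px A B x0 y0 z0 m n) \<and>
               real_of_int y = real_of_int p / real_of_int q * real_of_int (Py A B x0 y0 z0 m n) \<and>
               real_of_int z = real_of_int p / real_of_int q * real_of_int (Pz A B x0 y0 z0 m n)"
  have cq: "coprime q p" using h by (simp add: coprime_commute)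
  have dx: "q dvd Px A B x0 y0 z0 m n"
    using int_eq_of_real[of q x p] h cq coprime_dvd_mult_right_iff by blast
  have dy: "q dvd Py A B x0 y0 z0 m n"
    using int_eq_of_real[of q y p] h cq coprime_dvd_mult_right_iff by blast
  have dz: "q dvd Pz A B x0 y0 z0 m n"
    using int_eq_of_real[of q z p] h cq coprime_dvd_mult_right_iff by blast
  have "q dvd -A*x0*Px A B x0 y0 z0 m n + B*y0*Py A B x0 y0 z0 m n + C*z0*Pz A B x0 y0 z0 m n"
    by (intro dvd_add dvd_mult dx dy dz)
  then have "q dvd 2*A*C*z0^2*m^2" by (simp only: idm[OF assms(4), symmetric])
  moreover have "2*A*C*z0^2*m^2 dvd (2*lcm A B*C*z0^2)*m^2"
    by (simp add: mult_dvd_mono)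
  ultimately have d1: "q dvd (2*lcm A B*C*z0^2)*m^2" by (rule dvd_trans)
  have "q dvd A*x0*Px A B x0 y0 z0 m n - B*y0*Py A B x0 y0 z0 m n + C*z0*Pz A B x0 y0 z0 m n"
    by (intro dvd_add dvd_diff dvd_mult dx dy dz)
  then have "q dvd 2*B*C*z0^2*n^2" by (simp only: idn[OF assms(4), symmetric])
  moreover have "2*B*C*z0^2*n^2 dvd (2*lcm A B*C*z0^2)*n^2"
    by (simp add: mult_dvd_mono)
  ultimately have d2: "q dvd (2*lcm A B*C*z0^2)*n^2" by (rule dvd_trans)
  have "coprime (m^2) (n^2)" using h by simp
  then show "q dvd 2 * lcm A B * C * z0^2" using cop_dvd[OF d1 d2] by simp
qed

end
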